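(* Let $X$ be a robust $X$-set parameter, let $G$ and $G'$ be graphs, and let $\tilde\varphi:\mathfrak{X}(G)\to\mathfrak{X}(G')$ be a graph isomorphism. Suppose $X(K_1)=0$ or $G$ and $G'$ have no isolated vertices. Then $R'=V(G')\setminus\tilde\varphi(V(G))$ is $X$-irrelevant in $G'$, and $\varphi=\nu_{R'}\circ\tilde\varphi$ is a graph isomorphism $\mathfrak{X}(G)\to\mathfrak{X}(G')$ with $\varphi(V(G))=V(G')$ and $|\varphi(S)|=|S|$ for every $X$-set $S$ of $G$.
   Context: All graphs are finite, simple, undirected, with nonempty vertex set. A super $X$-set parameter $X$ assigns to each graph $G$ a family of subsets of $V(G)$, called the $X$-sets of $G$, such that: every graph isomorphism maps $X$-sets to $X$-sets; every graph has at least one $X$-set; and (Superset) if $S$ is an $X$-set of $G$ and $S\subseteq S'\subseteq V(G)$, then $S'$ is an $X$-set of $G$. $X(G)$ is the minimum cardinality of an $X$-set. A robust $X$-set parameter is a super $X$-set parameter that additionally satisfies: ($(n-1)$-set) if $G$ is connected of order $n\ge2$, every set of $n-1$ vertices is an $X$-set; (Component consistency) if $G_1,\dots,G_k$ are the connected components of $G$, then $S\subseteq V(G)$ is an $X$-set of $G$ iff $S\cap V(G_i)$ is an $X$-set of $G_i$ for all $i$. The $X$-TAR graph $\mathfrak{X}(G)$ has as vertices the $X$-sets of $G$, with $S_1S_2$ an edge iff $|S_1\ominus S_2|=1$. A vertex is $X$-irrelevant if it lies in no minimal (w.r.t. inclusion) $X$-set; a set is $X$-irrelevant if all its vertices are.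 For $R\subseteq V(G')$, $\nu_R(S)=S\ominus R$ (symmetric difference). *)

theory Defs
  imports Main
begin

text \<open>A graph is a pair (vertex set, edge set), edges being 2-element vertex sets.
  Input graphs live on vertex type nat (every finite graph is isomorphic to one on nat).\<close>

type_synonym 'a graph = "'a set \<times> 'a set set"

definition verts :: "'a graph \<Rightarrow> 'a set" where "verts G = fst G"
definition edges :: "'a graph \<Rightarrow> 'a set set" where "edges G = snd G"

definition wf_graph :: "'a graph \<Rightarrow> bool" where
  "wf_graph G \<longleftrightarrow> finite (verts G) \<and> verts G \<noteq> {} \<and>
     (\<forall>e\<in>edges G. e \<subseteq> verts G \<and> card e = 2)"

definition graph_iso :: "('a \<Rightarrow> 'b) \<Rightarrow> 'a graph \<Rightarrow> 'b graph \<Rightarrow> bool" where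
  "graph_iso f G H \<longleftrightarrow> bij_betw f (verts G) (verts H) \<and>
     (\<forall>x\<in>verts G. \<forall>y\<in>verts G. {x,y} \<in> edges G \<longleftrightarrow> {f x, f y} \<in> edges H)"

definition adj_rel :: "'a graph \<Rightarrow> ('a \<times> 'a) set" where
  "adj_rel G = {(x,y). x \<in> verts G \<and> y \<in> verts G \<and> {x,y} \<in> edges G}"

definition connected_graph :: "'a graph \<Rightarrow> bool" where
  "connected_graph G \<longleftrightarrow> (\<forall>x\<in>verts G. \<forall>y\<in>verts G. (x,y) \<in> (adj_rel G)\<^sup>*)"

definition component_sets :: "'a graph \<Rightarrow> 'a set set" where
  "component_sets G = {{y \<in> verts G. (x,y) \<in> (adj_rel G)\<^sup>*} | x. x \<in> verts G}"

definition induced :: "'a graph \<Rightarrow> 'a set \<Rightarrow> 'a graph" where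
  "induced G C = (C, {e \<in> edges G. e \<subseteq> C})"

definition no_isolated :: "'a graph \<Rightarrow> bool" where
  "no_isolated G \<longleftrightarrow> (\<forall>v\<in>verts G. \<exists>e\<in>edges G. v \<in> e)"

type_synonym param = "nat graph \<Rightarrow> nat set set"

definition super_param :: "param \<Rightarrow> bool" where
  "super_param X \<longleftrightarrow>
     (\<forall>G. wf_graph G \<longrightarrow> (\<forall>S\<in>X G. S \<subseteq> verts G)) \<and>
     (\<forall>G H f. wf_graph G \<and> wf_graph H \<and> graph_iso f G H \<longrightarrow> (\<forall>S\<in>X G. f ` S \<in> X H)) \<and>
     (\<forall>G. wf_graph G \<longrightarrow> X G \<noteq> {}) \<and>
     (\<forall>G S S'. wf_graph G \<and> S \<in> X G \<and> S \<subseteq> S' \<and> S' \<subseteq> verts G \<longrightarrow> S' \<in> X G)"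

definition robust_param :: "param \<Rightarrow> bool" where
  "robust_param X \<longleftrightarrow> super_param X \<and>
     (\<forall>G. wf_graph G \<and> connected_graph G \<and> card (verts G) \<ge> 2 \<longrightarrow>
        (\<forall>v\<in>verts G. verts G - {v} \<in> X G)) \<and>
     (\<forall>G S. wf_graph G \<and> S \<subseteq> verts G \<longrightarrow>
        (S \<in> X G \<longleftrightarrow> (\<forall>C\<in>component_sets G. S \<inter> C \<in> X (induced G C))))"

definition Xnum :: "param \<Rightarrow> nat graph \<Rightarrow> nat" where
  "Xnum X G = Min (card ` X G)"

definition K1 :: "nat graph" where "K1 = ({0}, {})"

definition symdiff :: "'a set \<Rightarrow> 'a set \<Rightarrow> 'a set" where
  "symdiff A B = (A - B) \<union> (B - A)"

definition TAR :: "param \<Rightarrow> nat graph \<Rightarrow> nat set graph" where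
  "TAR X G = (X G, {{S1, S2} | S1 S2. S1 \<in> X G \<and> S2 \<in> X G \<and> card (symdiff S1 S2) = 1})"

definition minimal_Xset :: "param \<Rightarrow> nat graph \<Rightarrow> nat set \<Rightarrow> bool" where
  "minimal_Xset X G S \<longleftrightarrow> S \<in> X G \<and> (\<forall>T\<in>X G. T \<subseteq> S \<longrightarrow> T = S)"

definition X_irrelevant :: "param \<Rightarrow> nat graph \<Rightarrow> nat set \<Rightarrow> bool" where
  "X_irrelevant X G R \<longleftrightarrow> (\<forall>v\<in>R. \<not> (\<exists>S. minimal_Xset X G S \<and> v \<in> S))"

definition nu :: "nat set \<Rightarrow> nat set \<Rightarrow> nat set" where
  "nu R S = symdiff S R"

end

theory Submission
  imports Defs
begin


lemma sd_iff: "x \<in> symdiff A B \<longleftrightarrow> (x \<in> A \<longleftrightarrow> x \<notin> B)"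
  by (auto simp: symdiff_def)

lemma sd_comm: "symdiff A B = symdiff B A" by (auto simp: symdiff_def)

lemma sd_cancel: "symdiff (symdiff P A) (symdiff Q A) = symdiff P Q"
  by (auto simp: symdiff_def)

lemma TAR_verts: "verts (TAR X G) = X G" by (simp add: TAR_def verts_def)

lemma TAR_edge: assumes "S \<in> X G" "T \<in> X G"
  shows "{S,T} \<in> edges (TAR X G) \<longleftrightarrow> card (symdiff S T) = 1"
proof
  assume "{S,T} \<in> edges (TAR X G)"
  then obtain S1 S2 where "{S,T} = {S1,S2}" "card (symdiff S1 S2) = 1"
    by (auto simp: TAR_def edges_def)
  then show "card (symdiff S T) = 1" by (metis doubleton_eq_iff sd_comm)
next
  assume "card (symdiff S T) = 1" then show "{S,T} \<in> edges (TAR X G)"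
    using assms by (auto simp: TAR_def edges_def)
qed

lemma sp1: "super_param X \<Longrightarrow> \<forall>G. wf_graph G \<longrightarrow> (\<forall>S\<in>X G. S \<subseteq> verts G)"
  unfolding super_param_def by (elim conjE) assumption
lemma sp2: "super_param X \<Longrightarrow> \<forall>G H f. wf_graph G \<and> wf_graph H \<and> graph_iso f G H \<longrightarrow> (\<forall>S\<in>X G. f ` S \<in> X H)"
  unfolding super_param_def by (elim conjE) assumption
lemma sp3: "super_param X \<Longrightarrow> \<forall>G. wf_graph G \<longrightarrow> X G \<noteq> {}"
  unfolding super_param_def by (elim conjE) assumption
lemma sp4: "super_param X \<Longrightarrow> \<forall>G S S'. wf_graph G \<and> S \<in> X G \<and> S \<subseteq> S' \<and> S' \<subseteq> verts G \<longrightarrow> S' \<in> X G"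
  unfolding super_param_def by (elim conjE) assumption

lemma sp_sub: assumes "super_param X" "wf_graph G" "S \<in> X G" shows "S \<subseteq> verts G"
  using sp1[OF assms(1)] assms(2,3) by blast
lemma sp_up: assumes "super_param X" "wf_graph G" "S \<in> X G" "S \<subseteq> S'" "S' \<subseteq> verts G" shows "S' \<in> X G"
  using sp4[OF assms(1)] assms(2-5) by blast
lemma sp_ne: assumes "super_param X" "wf_graph G" shows "X G \<noteq> {}"
  using sp3[OF assms(1)] assms(2) by blast
lemma sp_iso: assumes "super_param X" "wf_graph G" "wf_graph H" "graph_iso f G H" "S \<in> X G" shows "f ` S \<in> X H"
  using sp2[OF assms(1)] assms(2-5) by blast
lemma sp_V: "super_param X \<Longrightarrow> wf_graph G \<Longrightarrow> verts G \<in> X G"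
proof -
  assume a: "super_param X" "wf_graph G"
  then obtain S where "S \<in> X G" using sp_ne by blast
  then show ?thesis using sp_up[OF a \<open>S \<in> X G\<close> sp_sub[OF a \<open>S \<in> X G\<close>]] by simp
qed
lemma sp_fin: "super_param X \<Longrightarrow> wf_graph G \<Longrightarrow> finite (X G)"
proof -
  assume a: "super_param X" "wf_graph G"
  have "X G \<subseteq> Pow (verts G)" using sp_sub[OF a] by blast
  moreover have "finite (verts G)" using a(2) by (simp add: wf_graph_def)
  ultimately show ?thesis using finite_subset by blast
qed

lemma wf_K1: "wf_graph K1" by (simp add: wf_graph_def K1_def verts_def edges_def)

lemma K1_empty: assumes "super_param X" "Xnum X K1 = 0" shows "{} \<in> X K1"
proof -
  have fin: "finite (X K1)" using sp_fin[OF assms(1) wf_K1] .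
  have ne: "X K1 \<noteq> {}" using sp_ne[OF assms(1) wf_K1] .
  have "Min (card ` X K1) \<in> card ` X K1" using fin ne by (intro Min_in) auto
  then obtain S where S: "S \<in> X K1" "card S = 0" using assms(2) by (auto simp: Xnum_def)
  have "S \<subseteq> {0}" using sp_sub[OF assms(1) wf_K1 S(1)] by (simp add: K1_def verts_def)
  then have "finite S" using finite_subset by blast
  then have "S = {}" using S(2) by simp
  then show ?thesis using S(1) by simp
qed

lemma rp_conn: "robust_param X \<Longrightarrow> wf_graph G \<Longrightarrow> connected_graph G \<Longrightarrow> card (verts G) \<ge> 2 \<Longrightarrow> v \<in> verts G \<Longrightarrow> verts G - {v} \<in> X G"
proof -
  assume a: "robust_param X" "wf_graph G" "connected_graph G" "card (verts G) \<ge> 2" "v \<in> verts G"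
  have "\<forall>G. wf_graph G \<and> connected_graph G \<and> card (verts G) \<ge> 2 \<longrightarrow>
        (\<forall>v\<in>verts G. verts G - {v} \<in> X G)" using a(1) unfolding robust_param_def by (elim conjE)
  from this[rule_format, OF conjI[OF a(2) conjI[OF a(3) a(4)]] a(5)] show ?thesis .
qed
lemma rp_comp: "robust_param X \<Longrightarrow> wf_graph G \<Longrightarrow> S \<subseteq> verts G \<Longrightarrow> (\<forall>C\<in>component_sets G. S \<inter> C \<in> X (induced G C)) \<Longrightarrow> S \<in> X G"
proof -
  assume a: "robust_param X" "wf_graph G" "S \<subseteq> verts G" "(\<forall>C\<in>component_sets G. S \<inter> C \<in> X (induced G C))"
  have "\<forall>G S. wf_graph G \<and> S \<subseteq> verts G \<longrightarrow>
        (S \<in> X G \<longleftrightarrow> (\<forall>C\<in>component_sets G. S \<inter> C \<in> X (induced G C)))" using a(1) unfolding robust_param_def by (elim conjE)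
  from iffD2[OF this[rule_format, OF conjI[OF a(2) a(3)]] a(4)] show ?thesis .
qed

lemma path_induced:
  assumes "(x,y) \<in> (adj_rel G)\<^sup>*" and Cl: "\<And>z. z \<in> verts G \<Longrightarrow> (x,z) \<in> (adj_rel G)\<^sup>* \<Longrightarrow> z \<in> C"
  shows "(x,y) \<in> (adj_rel (induced G C))\<^sup>*"
  using assms(1)
proof (induction rule: rtrancl_induct)
  case base then show ?case by simp
next
  case (step y z)
  have xz: "(x,z) \<in> (adj_rel G)\<^sup>*" using step(1,2) by (rule rtrancl_into_rtrancl)
  have yz: "y \<in> verts G" "z \<in> verts G" "{y,z} \<in> edges G" using step(2) unfolding adj_rel_def by simp_all
  have zC: "z \<in> C" using Cl xz yz by blast
  have yC: "y \<in> C" using Cl step(1) yz by blast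
  have "(y,z) \<in> adj_rel (induced G C)" using yz yC zC
    unfolding adj_rel_def induced_def verts_def edges_def by simp
  with step(3) show ?case by (rule rtrancl_into_rtrancl)
qed

lemma Vminus:
  assumes rp: "robust_param X" and wf: "wf_graph G"
    and h: "Xnum X K1 = 0 \<or> no_isolated G" and u: "u \<in> verts G"
  shows "verts G - {u} \<in> X G"
proof -
  have sp: "super_param X" using rp unfolding robust_param_def by (elim conjE)
  have cc: "\<forall>C\<in>component_sets G. (verts G - {u}) \<inter> C \<in> X (induced G C)"
  proof
    fix C assume C: "C \<in> component_sets G"
    then obtain x where x: "x \<in> verts G" and Cdef: "C = {y \<in> verts G. (x,y) \<in> (adj_rel G)\<^sup>*}"
      by (auto simp: component_sets_def)
    have CV: "C \<subseteq> verts G" using Cdef by auto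
    have xC: "x \<in> C" using Cdef x by auto
    have wfC: "wf_graph (induced G C)"
      using wf CV xC finite_subset unfolding wf_graph_def induced_def verts_def edges_def by auto
    have vC: "verts (induced G C) = C" by (simp add: induced_def verts_def)
    have CX: "C \<in> X (induced G C)" using sp_V[OF sp wfC] vC by simp
    show "(verts G - {u}) \<inter> C \<in> X (induced G C)"
    proof (cases "u \<in> C")
      case False then have "(verts G - {u}) \<inter> C = C" using CV by auto
      then show ?thesis using CX by simp
    next
      case uC: True
      then have eq: "(verts G - {u}) \<inter> C = verts (induced G C) - {u}" using CV vC by auto
      show ?thesis
      proof (cases "card C \<ge> 2")
        case True
        have Cl: "\<And>z. z \<in> verts G \<Longrightarrow> (x,z) \<in> (adj_rel G)\<^sup>* \<Longrightarrow> z \<in> C" unfolding Cdef by simp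
        note path = path_induced[where C=C, OF _ Cl]
        have symR: "sym ((adj_rel (induced G C))\<^sup>*)"
          proof (rule sym_rtrancl)
          show "sym (adj_rel (induced G C))" unfolding sym_def adj_rel_def by (simp add: insert_commute)
        qed
        have conn: "connected_graph (induced G C)"
          unfolding connected_graph_def vC
        proof (intro ballI)
          fix a b assume ab: "a \<in> C" "b \<in> C"
          have h1: "(x,a) \<in> (adj_rel G)\<^sup>*" using ab(1) Cdef by simp
          have h2: "(x,b) \<in> (adj_rel G)\<^sup>*" using ab(2) Cdef by simp
          have "(a,x) \<in> (adj_rel (induced G C))\<^sup>*" by (rule symD[OF symR path[OF h1]])
          then show "(a,b) \<in> (adj_rel (induced G C))\<^sup>*" using path[OF h2] by (rule rtrancl_trans)
        qed
        show ?thesis using rp_conn[OF rp wfC conn] True uC vC eq by simp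
      next
        case False
        have finC: "finite C" using CV wf finite_subset by (auto simp: wf_graph_def)
        have Cu: "C = {u}"
        proof -
          have "card C \<le> 1" using False by simp
          moreover have "C \<noteq> {}" using uC by auto
          then have "card C \<noteq> 0" using finC by simp
          then have "card C \<ge> 1" by simp
          ultimately have "card C = 1" by simp
          then obtain z where "C = {z}" by (auto simp: card_1_singleton_iff)
          then show ?thesis using uC by simp
        qed
        show ?thesis
        proof (cases "Xnum X K1 = 0")
          case True
          have e: "{} \<in> X K1" using K1_empty[OF sp True] .
          have iso: "graph_iso (\<lambda>_. u) K1 (induced G C)"
          proof -
            have "\<forall>e\<in>edges G. card e = 2" using wf by (simp add: wf_graph_def)
            then have "{u} \<notin> edges G" by fastforce
            then show ?thesis using Cu
              by (auto simp: graph_iso_def K1_def verts_def edges_def induced_def bij_betw_def)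
          qed
          have "{} \<in> X (induced G C)" using sp_iso[OF sp wf_K1 wfC iso e] by simp
          moreover have "(verts G - {u}) \<inter> C = {}" using Cu by auto
          ultimately show ?thesis by simp
        next
          case False
          then have "no_isolated G" using h by simp
          then obtain e where e: "e \<in> edges G" "u \<in> e" using u by (auto simp: no_isolated_def)
          have "card e = 2" "e \<subseteq> verts G" using wf e(1) by (auto simp: wf_graph_def)
          then obtain a b where ab: "e = {a,b}" "a \<noteq> b" by (auto simp: card_2_iff)
          then obtain w where w: "e = {u,w}" "w \<noteq> u" using e(2) by auto
          have wV: "w \<in> verts G" using w \<open>e \<subseteq> verts G\<close> by auto
          have "(u,w) \<in> adj_rel G" using w e u wV by (auto simp: adj_rel_def)
          moreover have "(x,u) \<in> (adj_rel G)\<^sup>*" using uC Cdef by auto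
          ultimately have "(x,w) \<in> (adj_rel G)\<^sup>*" by simp
          then have "w \<in> C" using Cdef wV by auto
          then show ?thesis using Cu w by auto
        qed
      qed
    qed
  qed
  have sub: "verts G - {u} \<subseteq> verts G" by auto
  show ?thesis using rp_comp[OF rp wf sub cc] .
qed

lemma key_sd:
  assumes a1: "symdiff Z (P - {p}) = {a}" and a2: "symdiff Z (P - {q}) = {b}"
    and ne: "Z \<noteq> P - {p,q}" and pq: "p \<noteq> q" and p: "p \<in> P" and q: "q \<in> P"
  shows "Z = P"
proof (cases "a = p")
  case True
  show ?thesis
  proof (rule set_eqI)
    fix x
    have "x \<in> symdiff Z (P - {p}) \<longleftrightarrow> x = p" using a1 True by simp
    then show "x \<in> Z \<longleftrightarrow> x \<in> P" using p by (auto simp: sd_iff)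
  qed
next
  case False
  have pZ: "p \<notin> Z"
  proof
    assume "p \<in> Z" then have "p \<in> symdiff Z (P - {p})" by (simp add: sd_iff)
    then show False using a1 False by simp
  qed
  have "p \<in> symdiff Z (P - {q})" using pZ p pq by (simp add: sd_iff)
  then have bp: "b = p" using a2 by simp
  have qZ: "q \<notin> Z"
  proof
    assume "q \<in> Z" then have "q \<in> symdiff Z (P - {q})" by (simp add: sd_iff)
    then show False using a2 bp pq by simp
  qed
  have "q \<in> symdiff Z (P - {p})" using qZ q pq by (simp add: sd_iff)
  then have aq: "a = q" using a1 by simp
  have "Z = P - {p,q}"
  proof (rule set_eqI)
    fix x
    have "x \<in> symdiff Z (P - {p}) \<longleftrightarrow> x = q" using a1 aq by simp
    then show "x \<in> Z \<longleftrightarrow> x \<in> P - {p,q}" using pZ qZ by (auto simp: sd_iff)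
  qed
  then show ?thesis using ne by simp
qed



theorem theorem2p24:
  fixes X :: param and G G' :: "nat graph" and phit :: "nat set \<Rightarrow> nat set"
  assumes "robust_param X"
    and "wf_graph G" and "wf_graph G'"
    and "graph_iso phit (TAR X G) (TAR X G')"
    and "Xnum X K1 = 0 \<or> (no_isolated G \<and> no_isolated G')"
  shows "X_irrelevant X G' (verts G' - phit (verts G)) \<and>
         graph_iso (nu (verts G' - phit (verts G)) \<circ> phit) (TAR X G) (TAR X G') \<and>
         (nu (verts G' - phit (verts G)) \<circ> phit) (verts G) = verts G' \<and>
         (\<forall>S\<in>X G. card ((nu (verts G' - phit (verts G)) \<circ> phit) S) = card S)"
proof -
  note rp = assms(1) and wfG = assms(2) and wfG' = assms(3)
  have sp: "super_param X" using rp unfolding robust_param_def by (elim conjE)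
  define V where "V = verts G"
  define V' where "V' = verts G'"
  define F where "F = X G"
  define F' where "F' = X G'"
  define A where "A = phit V"
  define R where "R = V' - A"
  have finV: "finite V" using wfG by (simp add: V_def wf_graph_def)
  have FV: "S \<subseteq> V" if "S \<in> F" for S using sp_sub[OF sp wfG] that by (simp add: F_def V_def)
  have FV': "S \<subseteq> V'" if "S \<in> F'" for S using sp_sub[OF sp wfG'] that by (simp add: F'_def V'_def)
  have Fup: "S' \<in> F" if "S \<in> F" "S \<subseteq> S'" "S' \<subseteq> V" for S S'
    using sp_up[OF sp wfG, of S S'] that by (simp add: F_def V_def)
  have Fup': "S' \<in> F'" if "S \<in> F'" "S \<subseteq> S'" "S' \<subseteq> V'" for S S'
    using sp_up[OF sp wfG', of S S'] that by (simp add: F'_def V'_def)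
  have VF: "V \<in> F" using sp_V[OF sp wfG] by (simp add: F_def V_def)
  have VF': "V' \<in> F'" using sp_V[OF sp wfG'] by (simp add: F'_def V'_def)
  have finF: "finite F" using sp_fin[OF sp wfG] by (simp add: F_def)
  have finF': "finite F'" using sp_fin[OF sp wfG'] by (simp add: F'_def)
  have hG: "Xnum X K1 = 0 \<or> no_isolated G" using assms(5) by blast
  have hG': "Xnum X K1 = 0 \<or> no_isolated G'" using assms(5) by blast
  have VmF: "V - {u} \<in> F" if "u \<in> V" for u using Vminus[OF rp wfG hG, of u] that by (simp add: V_def F_def)
  have VmF': "V' - {u} \<in> F'" if "u \<in> V'" for u using Vminus[OF rp wfG' hG', of u] that by (simp add: V'_def F'_def)
  have bij: "bij_betw phit F F'" using assms(4) by (simp add: graph_iso_def TAR_verts F_def F'_def)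
  have phiF: "phit S \<in> F'" if "S \<in> F" for S using bij_betwE[OF bij] that by blast
  have injF: "inj_on phit F" using bij by (simp add: bij_betw_def)
  have surjF: "phit ` F = F'" using bij by (simp add: bij_betw_def)
  have adj: "card (symdiff (phit S) (phit T)) = 1" if ST: "S \<in> F" "T \<in> F" "card (symdiff S T) = 1" for S T
  proof -
    have "{S,T} \<in> edges (TAR X G)" using TAR_edge[of S X G T] ST by (simp add: F_def)
    moreover have "\<forall>x\<in>verts (TAR X G). \<forall>y\<in>verts (TAR X G). {x,y} \<in> edges (TAR X G) \<longleftrightarrow> {phit x, phit y} \<in> edges (TAR X G')"
      using assms(4) by (simp add: graph_iso_def)
    ultimately have "{phit S, phit T} \<in> edges (TAR X G')" using ST by (simp add: TAR_verts F_def)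
    then show ?thesis using TAR_edge[of "phit S" X G' "phit T"] phiF[OF ST(1)] phiF[OF ST(2)] by (simp add: F'_def)
  qed
  have AF': "A \<in> F'" using phiF[OF VF] by (simp add: A_def)
  have AV': "A \<subseteq> V'" using FV'[OF AF'] .
  define Y where "Y S = symdiff (phit S) A" for S
  have YV: "Y S \<subseteq> V'" if "S \<in> F" for S using FV'[OF phiF[OF that]] AV' by (auto simp: Y_def symdiff_def)
  have Yadj: "card (symdiff (Y S) (Y T)) = 1" if "S \<in> F" "T \<in> F" "card (symdiff S T) = 1" for S T
    using adj[OF that] by (simp add: Y_def sd_cancel)
  have Yinj: "S = T" if "S \<in> F" "T \<in> F" "Y S = Y T" for S T
  proof -
    have "symdiff (Y S) A = symdiff (Y T) A" using that(3) by simp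
    then have "phit S = phit T" by (simp add: Y_def symdiff_def) (blast)
    then show ?thesis using injF that(1,2) by (simp add: inj_on_def)
  qed
  have YV0: "Y V = {}" by (simp add: Y_def A_def symdiff_def)
  have ex: "\<forall>u\<in>V. \<exists>a. Y (V - {u}) = {a}"
  proof
    fix u assume u: "u \<in> V"
    have "symdiff (V - {u}) V = {u}" using u by (auto simp: symdiff_def)
    then have "card (symdiff (Y (V-{u})) (Y V)) = 1" using Yadj[OF VmF[OF u] VF] by simp
    then show "\<exists>a. Y (V - {u}) = {a}" using YV0 by (simp add: symdiff_def card_1_singleton_iff)
  qed
  then obtain pi where pi: "\<And>u. u \<in> V \<Longrightarrow> Y (V - {u}) = {pi u}" by metis
  have piV': "pi u \<in> V'" if "u \<in> V" for u using YV[OF VmF[OF that]] pi[OF that] by simp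
  have inj_pi: "inj_on pi V"
  proof (rule inj_onI)
    fix u w assume uw: "u \<in> V" "w \<in> V" "pi u = pi w"
    then have "Y (V-{u}) = Y (V-{w})" using pi by simp
    then have "V - {u} = V - {w}" using Yinj[OF VmF[OF uw(1)] VmF[OF uw(2)]] by simp
    then show "u = w" using uw(1,2) by blast
  qed
  have main: "\<forall>S\<in>F. card (V - S) = k \<longrightarrow> Y S = pi ` (V - S)" for k
  proof (induction k rule: less_induct)
    case (less k)
    show ?case
    proof (intro ballI impI)
      fix S assume S: "S \<in> F" and k: "card (V - S) = k"
      have SV: "S \<subseteq> V" using FV[OF S] .
      have finD: "finite (V - S)" using finV by simp
      show "Y S = pi ` (V - S)"
      proof (cases "k = 0")
        case True
        then have "V - S = {}" using k finD by simp
        then have "S = V" using SV by blast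
        then show ?thesis using YV0 by simp
      next
        case k0: False
        then have "V - S \<noteq> {}" using k by (metis card.empty)
        then obtain u where u: "u \<in> V - S" by blast
        show ?thesis
        proof (cases "k = 1")
          case True
          then obtain z where z: "V - S = {z}" using k by (auto simp: card_1_singleton_iff)
          then have "z \<in> V" "S = V - {z}" using SV by auto
          then show ?thesis using pi z by simp
        next
          case k1: False
          have c1: "card (V - S - {u}) = k - 1" using k u finD by simp
          then have "V - S - {u} \<noteq> {}" using k0 k1 by (metis card.empty diff_is_0_eq le_eq_less_or_eq less_one)
          then obtain w where w: "w \<in> V - S - {u}" by blast
          have uV: "u \<in> V" "u \<notin> S" using u by auto
          have wV: "w \<in> V" "w \<notin> S" "w \<noteq> u" using w by auto
          have S1F: "insert u S \<in> F" by (rule Fup[OF S]) (use SV uV in auto)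
          have S2F: "insert w S \<in> F" by (rule Fup[OF S]) (use SV wV in auto)
          have S3F: "insert u (insert w S) \<in> F" by (rule Fup[OF S]) (use SV uV wV in auto)
          have e1: "V - insert u S = V - S - {u}" by auto
          have e2: "V - insert w S = V - S - {w}" by auto
          have e3: "V - insert u (insert w S) = V - S - {u} - {w}" by auto
          have c2: "card (V - S - {w}) = k - 1" using k w finD by simp
          have c3: "card (V - S - {u} - {w}) = k - 2" using c1 w finD by simp
          have IH1: "Y (insert u S) = pi ` (V - S - {u})"
            using less.IH[of "k - 1"] S1F e1 c1 k0 by simp
          have IH2: "Y (insert w S) = pi ` (V - S - {w})"
            using less.IH[of "k - 1"] S2F e2 c2 k0 by simp
          have IH3: "Y (insert u (insert w S)) = pi ` (V - S - {u} - {w})"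
            using less.IH[of "k - 2"] S3F e3 c3 k0 by simp
          define P where "P = pi ` (V - S)"
          have P1: "pi ` (V - S - {u}) = P - {pi u}"
            unfolding P_def using inj_on_image_set_diff[OF inj_pi, of "V - S" "{u}"] uV by auto
          have P2: "pi ` (V - S - {w}) = P - {pi w}"
            unfolding P_def using inj_on_image_set_diff[OF inj_pi, of "V - S" "{w}"] wV by auto
          have P3: "pi ` (V - S - {u} - {w}) = P - {pi u, pi w}"
          proof -
            have eq: "V - S - {u} - {w} = V - S - {u,w}" by auto
            have "pi ` (V - S - {u,w}) = P - pi ` {u,w}"
              unfolding P_def using inj_on_image_set_diff[OF inj_pi, of "V - S" "{u,w}"] uV wV by auto
            then show ?thesis using eq by simp
          qed
          have sd1: "symdiff S (insert u S) = {u}" using uV by (auto simp: symdiff_def)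
          have sd2: "symdiff S (insert w S) = {w}" using wV by (auto simp: symdiff_def)
          have "card (symdiff (Y S) (Y (insert u S))) = 1" using Yadj[OF S S1F] sd1 by simp
          then obtain a where a: "symdiff (Y S) (P - {pi u}) = {a}"
            using IH1 P1 by (auto simp: card_1_singleton_iff)
          have "card (symdiff (Y S) (Y (insert w S))) = 1" using Yadj[OF S S2F] sd2 by simp
          then obtain b where b: "symdiff (Y S) (P - {pi w}) = {b}"
            using IH2 P2 by (auto simp: card_1_singleton_iff)
          have ne: "Y S \<noteq> P - {pi u, pi w}"
          proof
            assume "Y S = P - {pi u, pi w}"
            then have "Y S = Y (insert u (insert w S))" using IH3 P3 by simp
            then have "S = insert u (insert w S)" using Yinj[OF S S3F] by simp
            then show False using uV by blast
          qed
          have puw: "pi u \<noteq> pi w" using inj_pi uV wV by (auto simp: inj_on_def)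
          have "pi u \<in> P" "pi w \<in> P" unfolding P_def using uV wV by auto
          then show ?thesis using key_sd[OF a b ne puw] by (simp add: P_def)
        qed
      qed
    qed
  qed
  have Yform: "Y S = pi ` (V - S)" if "S \<in> F" for S using main that by blast
  have phiform: "phit S = symdiff (pi ` (V - S)) A" if "S \<in> F" for S
  proof -
    have "symdiff (Y S) A = phit S" by (auto simp: Y_def symdiff_def)
    then show ?thesis using Yform[OF that] by simp
  qed
  have surj: "pi ` V = V'"
  proof
    show "pi ` V \<subseteq> V'" using piV' by auto
    show "V' \<subseteq> pi ` V"
    proof
      fix v assume v: "v \<in> V'"
      show "v \<in> pi ` V"
      proof (cases "v \<in> A")
        case False
        obtain S0 where S0: "S0 \<in> F" "phit S0 = V'" using VF' surjF by (metis imageE)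
        have "v \<in> Y S0" using S0(2) v False by (simp add: Y_def sd_iff)
        then show ?thesis using Yform[OF S0(1)] by auto
      next
        case True
        obtain S0 where S0: "S0 \<in> F" "phit S0 = V' - {v}" using VmF'[OF v] surjF by (metis imageE)
        have "v \<in> Y S0" using S0(2) v True by (simp add: Y_def sd_iff)
        then show ?thesis using Yform[OF S0(1)] by auto
      qed
    qed
  qed
  have phi_eq: "(nu R \<circ> phit) S = pi ` S" if S: "S \<in> F" for S
  proof -
    have SV: "S \<subseteq> V" using FV[OF S] .
    have img: "pi ` (V - S) = V' - pi ` S" using inj_on_image_set_diff[OF inj_pi, of V S] SV surj by auto
    have sub: "pi ` S \<subseteq> V'" using surj SV by auto
    show ?thesis unfolding nu_def comp_def phiform[OF S] img R_def
      using AV' sub by (auto simp: symdiff_def)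
  qed
  have imgF: "pi ` S \<in> F'" if S: "S \<in> F" for S
  proof -
    define S' where "S' = S \<union> {u\<in>V. pi u \<in> R}"
    have SV: "S \<subseteq> V" using FV[OF S] .
    have S'F: "S' \<in> F" by (rule Fup[OF S]) (use SV in \<open>auto simp: S'_def\<close>)
    have "phit S' \<subseteq> pi ` S"
    proof
      fix x assume x: "x \<in> phit S'"
      have xV': "x \<in> V'" using FV'[OF phiF[OF S'F]] x by blast
      then obtain u where u: "u \<in> V" "x = pi u" using surj by auto
      have xs: "x \<in> symdiff (pi ` (V - S')) A" using phiform[OF S'F] x by simp
      show "x \<in> pi ` S"
      proof (cases "u \<in> S")
        case True thus ?thesis using u by auto
      next
        case uS: False
        show ?thesis
        proof (cases "pi u \<in> R")
          case True
          then have uS': "u \<in> S'" using u by (simp add: S'_def)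
          have "x \<notin> pi ` (V - S')"
          proof
            assume "x \<in> pi ` (V - S')"
            then obtain w where w: "w \<in> V - S'" "pi w = pi u" using u by auto
            then have "w = u" using inj_pi u(1) by (auto simp: inj_on_def)
            then show False using w uS' by simp
          qed
          then have "x \<in> A" using xs by (simp add: sd_iff)
          then show ?thesis using True u R_def by simp
        next
          case False
          then have "u \<in> V - S'" using u uS by (simp add: S'_def)
          then have "x \<in> pi ` (V - S')" using u by simp
          then have "x \<notin> A" using xs by (simp add: sd_iff)
          then have "x \<in> R" using xV' by (simp add: R_def)
          then show ?thesis using False u by simp
        qed
      qed
    qed
    moreover have "pi ` S \<subseteq> V'" using surj SV by auto
    ultimately show "pi ` S \<in> F'" using Fup'[OF phiF[OF S'F]] by simp
  qed
  have UF: "\<Union>F \<subseteq> V" using FV by blast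
  have injimg: "inj_on ((`) pi) F"
    by (rule inj_on_image) (rule inj_on_subset[OF inj_pi UF])
  have cardF: "card F = card F'" using bij_betw_same_card[OF bij] .
  have imgeq: "(`) pi ` F = F'"
  proof (rule card_subset_eq[OF finF'])
    show "(`) pi ` F \<subseteq> F'" using imgF by auto
    show "card ((`) pi ` F) = card F'" using card_image[OF injimg] cardF by simp
  qed
  have bimg: "bij_betw ((`) pi) F F'" using injimg imgeq by (simp add: bij_betw_def)
  have bphi: "bij_betw (nu R \<circ> phit) F F'"
    using bij_betw_cong[of F "nu R \<circ> phit" "(`) pi" F'] phi_eq bimg by simp
  have cardS: "card (pi ` S) = card S" if "S \<in> F" for S
    using card_image[OF inj_on_subset[OF inj_pi FV[OF that]]] .
  have sdimg: "symdiff (pi ` S) (pi ` T) = pi ` (symdiff S T)" if "S \<in> F" "T \<in> F" for S T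
  proof -
    have SV: "S \<subseteq> V" "T \<subseteq> V" using FV that by auto
    have "pi ` (S - T) = pi ` S - pi ` T" using inj_on_image_set_diff[OF inj_pi, of S T] SV by auto
    moreover have "pi ` (T - S) = pi ` T - pi ` S" using inj_on_image_set_diff[OF inj_pi, of T S] SV by auto
    ultimately show ?thesis by (simp add: symdiff_def image_Un)
  qed
  have giso: "graph_iso (nu R \<circ> phit) (TAR X G) (TAR X G')"
    unfolding graph_iso_def TAR_verts
  proof (intro conjI ballI)
    show "bij_betw (nu R \<circ> phit) (X G) (X G')" using bphi by (simp add: F_def F'_def)
  next
    fix S T assume ST: "S \<in> X G" "T \<in> X G"
    then have STF: "S \<in> F" "T \<in> F" by (simp_all add: F_def)
    have im: "pi ` S \<in> X G'" "pi ` T \<in> X G'" using imgF[OF STF(1)] imgF[OF STF(2)] by (simp_all add: F'_def)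
    have cs: "card (symdiff (pi ` S) (pi ` T)) = card (symdiff S T)"
    proof -
      have "symdiff S T \<subseteq> V" using FV[OF STF(1)] FV[OF STF(2)] by (auto simp: symdiff_def)
      then show ?thesis using sdimg[OF STF] card_image[OF inj_on_subset[OF inj_pi]] by simp
    qed
    show "{S, T} \<in> edges (TAR X G) \<longleftrightarrow> {(nu R \<circ> phit) S, (nu R \<circ> phit) T} \<in> edges (TAR X G')"
      using TAR_edge[of S X G T, OF ST] TAR_edge[of "pi ` S" X G' "pi ` T", OF im] cs phi_eq[OF STF(1)] phi_eq[OF STF(2)] by simp
  qed
  have irr: "X_irrelevant X G' R"
    unfolding X_irrelevant_def
  proof (intro ballI notI)
    fix v assume v: "v \<in> R" and "\<exists>S. minimal_Xset X G' S \<and> v \<in> S"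
    then obtain T where T: "minimal_Xset X G' T" "v \<in> T" by blast
    have TF': "T \<in> F'" and Tmin: "\<And>T'. T' \<in> F' \<Longrightarrow> T' \<subseteq> T \<Longrightarrow> T' = T"
      using T(1) by (auto simp: minimal_Xset_def F'_def)
    obtain S0 where S0: "S0 \<in> F" "phit S0 = T" using TF' surjF by (metis imageE)
    have vA: "v \<notin> A" "v \<in> V'" using v by (auto simp: R_def)
    obtain u where u: "u \<in> V" "v = pi u" using vA(2) surj by auto
    have "v \<in> pi ` (V - S0)" using T(2) phiform[OF S0(1)] S0(2) vA(1) by (simp add: sd_iff)
    then obtain w where w: "w \<in> V - S0" "pi w = v" by auto
    then have "w = u" using inj_pi u by (auto simp: inj_on_def)
    then have uS0: "u \<in> V - S0" using w by simp
    have S1F: "insert u S0 \<in> F" by (rule Fup[OF S0(1)]) (use FV[OF S0(1)] u in auto)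
    have "pi ` (V - insert u S0) = pi ` (V - S0) - {v}"
    proof -
      have "V - insert u S0 = (V - S0) - {u}" by auto
      then show ?thesis using inj_on_image_set_diff[OF inj_pi, of "V - S0" "{u}"] u uS0 by auto
    qed
    then have "phit (insert u S0) = T - {v}"
      using phiform[OF S1F] phiform[OF S0(1)] S0(2) vA(1) \<open>v \<in> pi ` (V - S0)\<close>
      by (auto simp: symdiff_def)
    then have "T - {v} \<in> F'" using phiF[OF S1F] by simp
    then have "T - {v} = T" using Tmin by blast
    then show False using T(2) by blast
  qed
  have Req: "verts G' - phit (verts G) = R" by (simp add: R_def A_def V_def V'_def)
  have phiV: "(nu R \<circ> phit) (verts G) = verts G'" using phi_eq[OF VF] surj by (simp add: V_def V'_def)
  have cardall: "\<forall>S\<in>X G. card ((nu R \<circ> phit) S) = card S"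
    using phi_eq cardS by (simp add: F_def)
  show ?thesis unfolding Req using irr giso phiV cardall by simp
qed
end
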